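(* Let $L\in\mathcal{N}$ and assume that $L$ is a sublattice of a free lattice. Let $K$ be a convex sublattice of $L$, and let $a\in L$ satisfy $a\parallel b$ for all $b\in K$. Then $|\{a\vee b: b\in K\}|\ge 3$, or $|\{a\wedge b: b\in K\}|\ge 3$, or $K$ is a distributive lattice.
   Context: $\mathcal{N}$ denotes the variety of lattices generated by the pentagon $N_5$. A convex sublattice of $L$ is a sublattice $K$ of $L$ such that whenever $x,z\in K$, $y\in L$ and $x\le y\le z$, then $y\in K$. For elements $x,y$, $x\parallel y$ means neither $x\le y$ nor $y\le x$. *)

theory Defs
  imports Main
begin

datatype 'v lterm = LVar 'v | LJoin "'v lterm" "'v lterm" | LMeet "'v lterm" "'v lterm"

fun lt_eval :: "('a \<Rightarrow> 'a \<Rightarrow> 'a) \<Rightarrow> ('a \<Rightarrow> 'a \<Rightarrow> 'a) \<Rightarrow> ('v \<Rightarrow> 'a) \<Rightarrow> 'v lterm \<Rightarrow> 'a" where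
  "lt_eval j m \<sigma> (LVar v) = \<sigma> v"
| "lt_eval j m \<sigma> (LJoin s t) = j (lt_eval j m \<sigma> s) (lt_eval j m \<sigma> t)"
| "lt_eval j m \<sigma> (LMeet s t) = m (lt_eval j m \<sigma> s) (lt_eval j m \<sigma> t)"

text \<open>N5 = {N0 < Na < Nc < N1, N0 < Nb < N1}, with Nb incomparable to Na and Nc.\<close>
datatype n5 = N0 | Na | Nb | Nc | N1

fun n5_le :: "n5 \<Rightarrow> n5 \<Rightarrow> bool" where
  "n5_le N0 _ = True"
| "n5_le _ N1 = True"
| "n5_le Na Na = True"
| "n5_le Na Nc = True"
| "n5_le Nb Nb = True"
| "n5_le Nc Nc = True"
| "n5_le _ _ = False"

definition n5_join :: "n5 \<Rightarrow> n5 \<Rightarrow> n5" where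
  "n5_join x y = (if n5_le x y then y else if n5_le y x then x else N1)"

definition n5_meet :: "n5 \<Rightarrow> n5 \<Rightarrow> n5" where
  "n5_meet x y = (if n5_le x y then x else if n5_le y x then y else N0)"

text \<open>The variety generated by N5 is the class of lattices satisfying every lattice
  identity (in countably many variables) that holds in N5.\<close>
definition in_variety_N5 :: "'a::lattice itself \<Rightarrow> bool" where
  "in_variety_N5 _ \<longleftrightarrow>
     (\<forall>s t :: nat lterm.
        (\<forall>\<sigma>::nat \<Rightarrow> n5. lt_eval n5_join n5_meet \<sigma> s = lt_eval n5_join n5_meet \<sigma> t) \<longrightarrow>
        (\<forall>\<sigma>::nat \<Rightarrow> 'a. lt_eval sup inf \<sigma> s = lt_eval sup inf \<sigma> t))"

text \<open>The free lattice FL(X) over the generators X (= UNIV :: 'x set) is the set of lattice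
  terms over X modulo the least congruence containing the lattice axioms.\<close>
inductive fl_eq :: "'x lterm \<Rightarrow> 'x lterm \<Rightarrow> bool" where
  fl_refl: "fl_eq s s"
| fl_sym: "fl_eq s t \<Longrightarrow> fl_eq t s"
| fl_trans: "fl_eq s t \<Longrightarrow> fl_eq t u \<Longrightarrow> fl_eq s u"
| fl_join_cong: "fl_eq s s' \<Longrightarrow> fl_eq t t' \<Longrightarrow> fl_eq (LJoin s t) (LJoin s' t')"
| fl_meet_cong: "fl_eq s s' \<Longrightarrow> fl_eq t t' \<Longrightarrow> fl_eq (LMeet s t) (LMeet s' t')"
| fl_join_comm: "fl_eq (LJoin s t) (LJoin t s)"
| fl_meet_comm: "fl_eq (LMeet s t) (LMeet t s)"
| fl_join_assoc: "fl_eq (LJoin (LJoin s t) u) (LJoin s (LJoin t u))"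
| fl_meet_assoc: "fl_eq (LMeet (LMeet s t) u) (LMeet s (LMeet t u))"
| fl_absorb_join: "fl_eq (LJoin s (LMeet s t)) s"
| fl_absorb_meet: "fl_eq (LMeet s (LJoin s t)) s"

text \<open>The lattice 'a is (isomorphic to) a sublattice of the free lattice FL('x):
  there is a lattice embedding of 'a into FL('x) (represented on terms, modulo fl_eq).\<close>
definition embeds_in_free_lattice :: "'a::lattice itself \<Rightarrow> 'x itself \<Rightarrow> bool" where
  "embeds_in_free_lattice _ _ \<longleftrightarrow>
     (\<exists>f :: 'a \<Rightarrow> 'x lterm.
        (\<forall>x y. fl_eq (f x) (f y) \<longrightarrow> x = y) \<and>
        (\<forall>x y. fl_eq (f (sup x y)) (LJoin (f x) (f y))) \<and>
        (\<forall>x y. fl_eq (f (inf x y)) (LMeet (f x) (f y))))"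

definition convex_sublattice :: "'a::lattice set \<Rightarrow> bool" where
  "convex_sublattice K \<longleftrightarrow>
     (\<forall>x\<in>K. \<forall>y\<in>K. sup x y \<in> K \<and> inf x y \<in> K) \<and>
     (\<forall>x\<in>K. \<forall>z\<in>K. \<forall>y. x \<le> y \<and> y \<le> z \<longrightarrow> y \<in> K)"

definition incomparable :: "'a::order \<Rightarrow> 'a \<Rightarrow> bool" (infix "\<parallel>" 50) where
  "x \<parallel> y \<longleftrightarrow> \<not> x \<le> y \<and> \<not> y \<le> x"

definition distributive_on :: "'a::lattice set \<Rightarrow> bool" where
  "distributive_on K \<longleftrightarrow>
     (\<forall>x\<in>K. \<forall>y\<in>K. \<forall>z\<in>K. inf x (sup y z) = sup (inf x y) (inf x z))"

end

theory Submission
  imports Defs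
begin


fun wle :: "'x lterm \<Rightarrow> 'x lterm \<Rightarrow> bool" where
  "wle (LJoin s1 s2) t = (wle s1 t \<and> wle s2 t)"
| "wle s (LMeet t1 t2) = (wle s t1 \<and> wle s t2)"
| "wle (LVar x) (LVar y) = (x = y)"
| "wle (LVar x) (LJoin t1 t2) = (wle (LVar x) t1 \<or> wle (LVar x) t2)"
| "wle (LMeet s1 s2) (LVar y) = (wle s1 (LVar y) \<or> wle s2 (LVar y))"
| "wle (LMeet s1 s2) (LJoin t1 t2) =
     (wle s1 (LJoin t1 t2) \<or> wle s2 (LJoin t1 t2) \<or> wle (LMeet s1 s2) t1 \<or> wle (LMeet s1 s2) t2)"

lemma wle_meetR: "wle s (LMeet t1 t2) = (wle s t1 \<and> wle s t2)"
  by (induction s) auto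

lemma wle_upL: "wle s t \<Longrightarrow> wle s (LJoin t u)"
  by (induction s) auto
lemma wle_upR: "wle s t \<Longrightarrow> wle s (LJoin u t)"
  by (induction s) auto
lemma wle_downL: "wle s t \<Longrightarrow> wle (LMeet s u) t"
  by (induction t) (auto simp: wle_meetR)
lemma wle_downR: "wle s t \<Longrightarrow> wle (LMeet u s) t"
  by (induction t) (auto simp: wle_meetR)

lemma wle_refl: "wle s s"
  by (induction s) (auto intro: wle_upL wle_upR wle_downL wle_downR)

lemma wle_trans_aux:
  fixes s t u :: "'x lterm"
  shows "size s + size t + size u = n \<Longrightarrow> wle s t \<Longrightarrow> wle t u \<Longrightarrow> wle s u"
proof (induction n arbitrary: s t u rule: less_induct)
  case (less n)
  have IH: "\<And>s' t' u' :: 'x lterm. size s' + size t' + size u' < n \<Longrightarrow> wle s' t' \<Longrightarrow> wle t' u' \<Longrightarrow> wle s' u'"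
    using less.IH by metis
  have st: "wle s t" and tu: "wle t u" using less by auto
  note sz = less.prems(1)
  show ?case
  proof (cases s)
    case (LJoin s1 s2)
    then show ?thesis using st tu IH[of s1 t u] IH[of s2 t u] sz by auto
  next
    case sv: (LVar x)
    show ?thesis
    proof (cases u)
      case (LMeet u1 u2)
      then show ?thesis using st tu IH[of s t u1] IH[of s t u2] sz by (auto simp: wle_meetR)
    next
      case uv: (LVar y)
      show ?thesis
      proof (cases t)
        case (LVar z) then show ?thesis using st tu sv uv by auto
      next
        case (LJoin t1 t2) then show ?thesis using st tu sv uv IH[of s t1 u] IH[of s t2 u] sz by auto
      next
        case (LMeet t1 t2) then show ?thesis using st tu sv uv IH[of s t1 u] IH[of s t2 u] sz
          by (auto simp: wle_meetR)
      qed
    next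
      case uj: (LJoin u1 u2)
      show ?thesis
      proof (cases t)
        case (LVar z) then show ?thesis using st tu sv uj by auto
      next
        case (LJoin t1 t2) then show ?thesis using st tu sv uj IH[of s t1 u] IH[of s t2 u] sz by auto
      next
        case (LMeet t1 t2)
        then show ?thesis using st tu sv uj IH[of s t1 u] IH[of s t2 u] IH[of s t u1] IH[of s t u2] sz
          by (auto simp: wle_meetR intro: wle_upL wle_upR)
      qed
    qed
  next
    case sm: (LMeet s1 s2)
    show ?thesis
    proof (cases u)
      case (LMeet u1 u2)
      then show ?thesis using st tu IH[of s t u1] IH[of s t u2] sz by (auto simp: wle_meetR)
    next
      case uv: (LVar y)
      show ?thesis
      proof (cases t)
        case (LVar z) then show ?thesis using st tu sm uv IH[of s1 t u] IH[of s2 t u] sz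
          by (auto intro: wle_downL wle_downR)
      next
        case (LJoin t1 t2) then show ?thesis using st tu sm uv IH[of s1 t u] IH[of s2 t u]
            IH[of s t1 u] IH[of s t2 u] sz
          by (auto intro: wle_downL wle_downR)
      next
        case (LMeet t1 t2) then show ?thesis using st tu sm uv IH[of s t1 u] IH[of s t2 u] sz
          by (auto simp: wle_meetR)
      qed
    next
      case uj: (LJoin u1 u2)
      show ?thesis
      proof (cases t)
        case (LVar z) then show ?thesis using st tu sm uj IH[of s1 t u] IH[of s2 t u] sz
          by (auto intro: wle_downL wle_downR)
      next
        case (LJoin t1 t2) then show ?thesis using st tu sm uj IH[of s1 t u] IH[of s2 t u]
            IH[of s t1 u] IH[of s t2 u] sz
          by (auto intro: wle_downL wle_downR)
      next
        case (LMeet t1 t2)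
        then show ?thesis using st tu sm uj IH[of s t1 u] IH[of s t2 u] IH[of s t u1] IH[of s t u2] sz
          by (auto simp: wle_meetR intro: wle_upL wle_upR)
      qed
    qed
  qed
qed

lemma wle_trans: "wle s t \<Longrightarrow> wle t u \<Longrightarrow> wle s u"
  using wle_trans_aux by blast

lemma wle_jj: "wle s s' \<Longrightarrow> wle t t' \<Longrightarrow> wle (LJoin s t) (LJoin s' t')"
  by (simp add: wle_upL wle_upR)
lemma wle_mm: "wle s s' \<Longrightarrow> wle t t' \<Longrightarrow> wle (LMeet s t) (LMeet s' t')"
  by (simp add: wle_meetR wle_downL wle_downR)

lemma fl_wle: "fl_eq s t \<Longrightarrow> wle s t \<and> wle t s"
proof (induction rule: fl_eq.induct)
  case (fl_refl s) then show ?case by (simp add: wle_refl)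
next
  case (fl_sym s t) then show ?case by simp
next
  case (fl_trans s t u) then show ?case using wle_trans by blast
next
  case (fl_join_cong s s' t t') then show ?case using wle_jj[of s s' t t'] wle_jj[of s' s t' t] by blast
next
  case (fl_meet_cong s s' t t') then show ?case using wle_mm[of s s' t t'] wle_mm[of s' s t' t] by blast
next
  case (fl_join_comm s t) then show ?case by (simp add: wle_upL wle_upR wle_refl)
next
  case (fl_meet_comm s t) then show ?case by (simp add: wle_meetR wle_downL wle_downR wle_refl)
next
  case (fl_join_assoc s t u) then show ?case by (simp add: wle_upL wle_upR wle_refl)
next
  case (fl_meet_assoc s t u) then show ?case by (simp add: wle_meetR wle_downL wle_downR wle_refl)
next
  case (fl_absorb_join s t) then show ?case by (simp add: wle_upL wle_refl wle_downL)
next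
  case (fl_absorb_meet s t) then show ?case by (simp add: wle_meetR wle_downL wle_refl wle_upL)
qed

lemmas [trans] = fl_trans

lemma fl_idem_j: "fl_eq (LJoin s s) s"
proof -
  have "fl_eq (LJoin s s) (LJoin s (LMeet s (LJoin s s)))"
    by (rule fl_join_cong[OF fl_refl fl_sym[OF fl_absorb_meet]])
  also have "fl_eq \<dots> s" by (rule fl_absorb_join)
  finally show ?thesis .
qed

lemma fl_idem_m: "fl_eq (LMeet s s) s"
proof -
  have "fl_eq (LMeet s s) (LMeet s (LJoin s (LMeet s s)))"
    by (rule fl_meet_cong[OF fl_refl fl_sym[OF fl_absorb_join]])
  also have "fl_eq \<dots> s" by (rule fl_absorb_meet)
  finally show ?thesis .
qed

lemma fle_to_m: "fl_eq (LJoin s t) t \<Longrightarrow> fl_eq (LMeet s t) s"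
proof -
  assume h: "fl_eq (LJoin s t) t"
  have "fl_eq (LMeet s t) (LMeet s (LJoin s t))"
    by (rule fl_meet_cong[OF fl_refl fl_sym[OF h]])
  also have "fl_eq \<dots> s" by (rule fl_absorb_meet)
  finally show ?thesis .
qed

lemma m_to_fle: "fl_eq (LMeet s t) s \<Longrightarrow> fl_eq (LJoin s t) t"
proof -
  assume h: "fl_eq (LMeet s t) s"
  have "fl_eq (LJoin s t) (LJoin (LMeet s t) t)"
    by (rule fl_join_cong[OF fl_sym[OF h] fl_refl])
  also have "fl_eq \<dots> (LJoin t (LMeet s t))" by (rule fl_join_comm)
  also have "fl_eq \<dots> (LJoin t (LMeet t s))" by (rule fl_join_cong[OF fl_refl fl_meet_comm])
  also have "fl_eq \<dots> t" by (rule fl_absorb_join)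
  finally show ?thesis .
qed

lemma fle_trans: "fl_eq (LJoin s t) t \<Longrightarrow> fl_eq (LJoin t u) u \<Longrightarrow> fl_eq (LJoin s u) u"
proof -
  assume h1: "fl_eq (LJoin s t) t" and h2: "fl_eq (LJoin t u) u"
  have "fl_eq (LJoin s u) (LJoin s (LJoin t u))" by (rule fl_join_cong[OF fl_refl fl_sym[OF h2]])
  also have "fl_eq \<dots> (LJoin (LJoin s t) u)" by (rule fl_sym[OF fl_join_assoc])
  also have "fl_eq \<dots> (LJoin t u)" by (rule fl_join_cong[OF h1 fl_refl])
  also have "fl_eq \<dots> u" by (rule h2)
  finally show ?thesis .
qed

lemma fle_ub1: "fl_eq (LJoin s (LJoin s t)) (LJoin s t)"
proof -
  have "fl_eq (LJoin s (LJoin s t)) (LJoin (LJoin s s) t)" by (rule fl_sym[OF fl_join_assoc])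
  also have "fl_eq \<dots> (LJoin s t)" by (rule fl_join_cong[OF fl_idem_j fl_refl])
  finally show ?thesis .
qed

lemma fle_ub2: "fl_eq (LJoin t (LJoin s t)) (LJoin s t)"
proof -
  have "fl_eq (LJoin t (LJoin s t)) (LJoin t (LJoin t s))" by (rule fl_join_cong[OF fl_refl fl_join_comm])
  also have "fl_eq \<dots> (LJoin t s)" by (rule fle_ub1)
  also have "fl_eq \<dots> (LJoin s t)" by (rule fl_join_comm)
  finally show ?thesis .
qed

lemma fle_lub: "fl_eq (LJoin s1 t) t \<Longrightarrow> fl_eq (LJoin s2 t) t \<Longrightarrow> fl_eq (LJoin (LJoin s1 s2) t) t"
proof -
  assume h1: "fl_eq (LJoin s1 t) t" and h2: "fl_eq (LJoin s2 t) t"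
  have "fl_eq (LJoin (LJoin s1 s2) t) (LJoin s1 (LJoin s2 t))" by (rule fl_join_assoc)
  also have "fl_eq \<dots> (LJoin s1 t)" by (rule fl_join_cong[OF fl_refl h2])
  also have "fl_eq \<dots> t" by (rule h1)
  finally show ?thesis .
qed

lemma fle_lb1: "fl_eq (LMeet (LMeet s t) s) (LMeet s t)"
proof -
  have "fl_eq (LMeet (LMeet s t) s) (LMeet s (LMeet s t))" by (rule fl_meet_comm)
  also have "fl_eq \<dots> (LMeet (LMeet s s) t)" by (rule fl_sym[OF fl_meet_assoc])
  also have "fl_eq \<dots> (LMeet s t)" by (rule fl_meet_cong[OF fl_idem_m fl_refl])
  finally show ?thesis .
qed

lemma fle_lb2: "fl_eq (LMeet (LMeet s t) t) (LMeet s t)"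
proof -
  have "fl_eq (LMeet (LMeet s t) t) (LMeet s (LMeet t t))" by (rule fl_meet_assoc)
  also have "fl_eq \<dots> (LMeet s t)" by (rule fl_meet_cong[OF fl_refl fl_idem_m])
  finally show ?thesis .
qed

lemma fle_glb: "fl_eq (LMeet s t1) s \<Longrightarrow> fl_eq (LMeet s t2) s \<Longrightarrow> fl_eq (LMeet s (LMeet t1 t2)) s"
proof -
  assume h1: "fl_eq (LMeet s t1) s" and h2: "fl_eq (LMeet s t2) s"
  have "fl_eq (LMeet s (LMeet t1 t2)) (LMeet (LMeet s t1) t2)" by (rule fl_sym[OF fl_meet_assoc])
  also have "fl_eq \<dots> (LMeet s t2)" by (rule fl_meet_cong[OF h1 fl_refl])
  also have "fl_eq \<dots> s" by (rule h2)
  finally show ?thesis .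
qed

definition fle where "fle s t \<longleftrightarrow> fl_eq (LJoin s t) t"

lemma fle_joinI1: "fle s t1 \<Longrightarrow> fle s (LJoin t1 t2)"
  unfolding fle_def using fle_trans fle_ub1 by blast
lemma fle_joinI2: "fle s t2 \<Longrightarrow> fle s (LJoin t1 t2)"
  unfolding fle_def using fle_trans fle_ub2 by blast
lemma fle_joinL: "fle s1 t \<Longrightarrow> fle s2 t \<Longrightarrow> fle (LJoin s1 s2) t"
  unfolding fle_def using fle_lub by blast
lemma fle_meetE1: "fle s1 t \<Longrightarrow> fle (LMeet s1 s2) t"
  unfolding fle_def using fle_trans m_to_fle[OF fle_lb1] by blast
lemma fle_meetE2: "fle s2 t \<Longrightarrow> fle (LMeet s1 s2) t"
  unfolding fle_def using fle_trans m_to_fle[OF fle_lb2] by blast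
lemma fle_meetR: "fle s t1 \<Longrightarrow> fle s t2 \<Longrightarrow> fle s (LMeet t1 t2)"
  unfolding fle_def using fle_glb fle_to_m m_to_fle by blast
lemma fle_refl: "fle s s"
  unfolding fle_def by (rule fl_idem_j)

lemma wle_sound: "wle s t \<Longrightarrow> fle s t"
  by (induction s t rule: wle.induct)
     (auto intro: fle_joinI1 fle_joinI2 fle_joinL fle_meetE1 fle_meetE2 fle_meetR fle_refl)

lemma L_le_iff:
  fixes f :: "'a::lattice \<Rightarrow> 'x lterm"
  assumes inj: "\<forall>x y. fl_eq (f x) (f y) \<longrightarrow> x = y"
    and hj: "\<forall>x y. fl_eq (f (sup x y)) (LJoin (f x) (f y))"
  shows "x \<le> y \<longleftrightarrow> wle (f x) (f y)"
proof
  assume "x \<le> y"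
  then have "sup x y = y" by (simp add: sup.absorb2)
  then have "fl_eq (f y) (LJoin (f x) (f y))" using hj by metis
  then have "wle (LJoin (f x) (f y)) (f y)" using fl_wle by blast
  then show "wle (f x) (f y)" by simp
next
  assume "wle (f x) (f y)"
  then have "fl_eq (LJoin (f x) (f y)) (f y)" using wle_sound fle_def by blast
  then have "fl_eq (f (sup x y)) (f y)" using hj fl_trans by blast
  then have "sup x y = y" using inj by blast
  then show "x \<le> y" by (metis sup.cobounded1)
qed

lemma whitman_L:
  fixes f :: "'a::lattice \<Rightarrow> 'x lterm" and x y u v :: 'a
  assumes inj: "\<forall>x y. fl_eq (f x) (f y) \<longrightarrow> x = y"
    and hj: "\<forall>x y. fl_eq (f (sup x y)) (LJoin (f x) (f y))"
    and hm: "\<forall>x y. fl_eq (f (inf x y)) (LMeet (f x) (f y))"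
    and le: "inf x y \<le> sup u v"
  shows "x \<le> sup u v \<or> y \<le> sup u v \<or> inf x y \<le> u \<or> inf x y \<le> v"
proof -
  note iff = L_le_iff[OF inj hj]
  have m1: "wle (LMeet (f x) (f y)) (f (inf x y))" and m2: "wle (f (inf x y)) (LMeet (f x) (f y))"
    using fl_wle hm by blast+
  have j1: "wle (LJoin (f u) (f v)) (f (sup u v))" and j2: "wle (f (sup u v)) (LJoin (f u) (f v))"
    using fl_wle hj by blast+
  have "wle (f (inf x y)) (f (sup u v))" using le iff by blast
  then have "wle (LMeet (f x) (f y)) (LJoin (f u) (f v))" using m1 j2 wle_trans by blast
  then have "wle (f x) (LJoin (f u) (f v)) \<or> wle (f y) (LJoin (f u) (f v)) \<or>
     wle (LMeet (f x) (f y)) (f u) \<or> wle (LMeet (f x) (f y)) (f v)" by simp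
  then show ?thesis
  proof (elim disjE)
    assume "wle (f x) (LJoin (f u) (f v))" then show ?thesis using j1 wle_trans iff by blast
  next
    assume "wle (f y) (LJoin (f u) (f v))" then show ?thesis using j1 wle_trans iff by blast
  next
    assume "wle (LMeet (f x) (f y)) (f u)" then show ?thesis using m2 wle_trans iff by blast
  next
    assume "wle (LMeet (f x) (f y)) (f v)" then show ?thesis using m2 wle_trans iff by blast
  qed
qed



lemma n5_tab[simp]:
  "n5_join N0 x = x" "n5_join x N0 = x" "n5_join N1 x = N1" "n5_join x N1 = N1"
  "n5_meet N0 x = N0" "n5_meet x N0 = N0" "n5_meet N1 x = x" "n5_meet x N1 = x"
  "n5_join x x = x" "n5_meet x x = x"
  "n5_join Na Nb = N1" "n5_join Nb Na = N1" "n5_join Nc Nb = N1" "n5_join Nb Nc = N1"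
  "n5_join Na Nc = Nc" "n5_join Nc Na = Nc"
  "n5_meet Na Nb = N0" "n5_meet Nb Na = N0" "n5_meet Nc Nb = N0" "n5_meet Nb Nc = N0"
  "n5_meet Na Nc = Na" "n5_meet Nc Na = Na"
  by (cases x; simp add: n5_join_def n5_meet_def)+

lemma var_id:
  assumes "in_variety_N5 TYPE('a::lattice)"
    and "\<And>\<sigma>::nat\<Rightarrow>n5. lt_eval n5_join n5_meet \<sigma> s = lt_eval n5_join n5_meet \<sigma> t"
  shows "lt_eval sup inf (\<sigma>::nat\<Rightarrow>'a) s = lt_eval sup inf \<sigma> t"
  using assms unfolding in_variety_N5_def by blast

lemma I1:
  fixes x p q r :: "'a::lattice"
  assumes "in_variety_N5 TYPE('a::lattice)"
  shows "inf (inf (sup q p) (sup p r)) (sup x p) \<le>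
     sup (sup (sup p (inf x r)) (inf (sup q p) r)) (inf x (sup q p))" (is "?A \<le> ?B")
proof -
  let ?s = "LMeet (LMeet (LMeet (LJoin (LVar 2) (LVar 1)) (LJoin (LVar 1) (LVar 3))) (LJoin (LVar 0) (LVar 1)))
     (LJoin (LJoin (LJoin (LVar 1) (LMeet (LVar 0) (LVar 3))) (LMeet (LJoin (LVar 2) (LVar 1)) (LVar 3))) (LMeet (LVar 0) (LJoin (LVar 2) (LVar (1::nat)))))"
  let ?t = "LMeet (LMeet (LJoin (LVar 2) (LVar 1)) (LJoin (LVar 1) (LVar 3))) (LJoin (LVar 0) (LVar (1::nat)))"
  have "lt_eval sup inf (\<lambda>n. [x,p,q,r] ! n) ?s = lt_eval sup inf (\<lambda>n. [x,p,q,r] ! n) ?t"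
  proof (rule var_id[OF assms])
    fix \<sigma> :: "nat \<Rightarrow> n5"
    show "lt_eval n5_join n5_meet \<sigma> ?s = lt_eval n5_join n5_meet \<sigma> ?t"
      by (cases "\<sigma> 0"; cases "\<sigma> 1"; cases "\<sigma> 2"; cases "\<sigma> 3"; simp)
  qed
  then have "inf ?A ?B = ?A" by simp
  then show ?thesis by (metis inf.orderI)
qed


lemma I0:
  fixes x y z :: "'a::lattice"
  assumes "in_variety_N5 TYPE('a)"
  shows "inf x (sup y z) = inf x (sup y (inf x (sup z (inf x y))))"
proof -
  let ?s = "LMeet (LVar 0) (LJoin (LVar 1) (LVar (2::nat)))"
  let ?t = "LMeet (LVar 0) (LJoin (LVar 1) (LMeet (LVar 0) (LJoin (LVar 2) (LMeet (LVar 0) (LVar (1::nat))))))"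
  have "lt_eval sup inf (\<lambda>n. [x,y,z] ! n) ?s = lt_eval sup inf (\<lambda>n. [x,y,z] ! n) ?t"
  proof (rule var_id[OF assms])
    fix \<sigma> :: "nat \<Rightarrow> n5"
    show "lt_eval n5_join n5_meet \<sigma> ?s = lt_eval n5_join n5_meet \<sigma> ?t"
      by (cases "\<sigma> 0"; cases "\<sigma> 1"; cases "\<sigma> 2"; simp)
  qed
  then show ?thesis by simp
qed

lemma I0d:
  fixes x y z :: "'a::lattice"
  assumes "in_variety_N5 TYPE('a)"
  shows "sup x (inf y z) = sup x (inf y (sup x (inf z (sup x y))))"
proof -
  let ?s = "LJoin (LVar 0) (LMeet (LVar 1) (LVar (2::nat)))"
  let ?t = "LJoin (LVar 0) (LMeet (LVar 1) (LJoin (LVar 0) (LMeet (LVar 2) (LJoin (LVar 0) (LVar (1::nat))))))"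
  have "lt_eval sup inf (\<lambda>n. [x,y,z] ! n) ?s = lt_eval sup inf (\<lambda>n. [x,y,z] ! n) ?t"
  proof (rule var_id[OF assms])
    fix \<sigma> :: "nat \<Rightarrow> n5"
    show "lt_eval n5_join n5_meet \<sigma> ?s = lt_eval n5_join n5_meet \<sigma> ?t"
      by (cases "\<sigma> 0"; cases "\<sigma> 1"; cases "\<sigma> 2"; simp)
  qed
  then show ?thesis by simp
qed

lemma I2:
  fixes x p q r :: "'a::lattice"
  assumes "in_variety_N5 TYPE('a)"
  shows "inf (inf (inf q (sup x r)) (sup (inf p q) r)) (sup x (inf p q)) \<le>
     sup (sup (inf p q) (inf q r)) (inf x q)" (is "?B \<le> ?A")
proof -
  let ?s = "LJoin (LJoin (LJoin (LMeet (LVar 1) (LVar 2)) (LMeet (LVar 2) (LVar 3))) (LMeet (LVar 0) (LVar 2)))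
     (LMeet (LMeet (LMeet (LVar 2) (LJoin (LVar 0) (LVar 3))) (LJoin (LMeet (LVar 1) (LVar 2)) (LVar 3))) (LJoin (LVar 0) (LMeet (LVar 1) (LVar (2::nat)))))"
  let ?t = "LJoin (LJoin (LMeet (LVar 1) (LVar 2)) (LMeet (LVar 2) (LVar 3))) (LMeet (LVar 0) (LVar (2::nat)))"
  have "lt_eval sup inf (\<lambda>n. [x,p,q,r] ! n) ?s = lt_eval sup inf (\<lambda>n. [x,p,q,r] ! n) ?t"
  proof (rule var_id[OF assms])
    fix \<sigma> :: "nat \<Rightarrow> n5"
    show "lt_eval n5_join n5_meet \<sigma> ?s = lt_eval n5_join n5_meet \<sigma> ?t"
      by (cases "\<sigma> 0"; cases "\<sigma> 1"; cases "\<sigma> 2"; cases "\<sigma> 3"; simp)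
  qed
  then have "sup ?A ?B = ?A" by simp
  then show ?thesis by (metis sup.orderI)
qed

lemma SDm:
  fixes x y z :: "'a::lattice"
  assumes "in_variety_N5 TYPE('a)" and h: "inf x y = inf x z"
  shows "inf x (sup y z) = inf x y"
proof -
  have "inf x (sup y z) = inf x (sup y (inf x (sup z (inf x y))))" by (rule I0[OF assms(1)])
  also have "sup z (inf x y) = z" using h by (metis inf.cobounded2 sup.absorb1)
  also have "inf x z = inf x y" using h by simp
  also have "sup y (inf x y) = y" by (simp add: sup.absorb1)
  finally show ?thesis .
qed

lemma SDj:
  fixes x y z :: "'a::lattice"
  assumes "in_variety_N5 TYPE('a)" and h: "sup x y = sup x z"
  shows "sup x (inf y z) = sup x y"
proof -
  have "sup x (inf y z) = sup x (inf y (sup x (inf z (sup x y))))" by (rule I0d[OF assms(1)])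
  also have "inf z (sup x y) = z" using h by (metis sup.cobounded2 inf.absorb1)
  also have "sup x z = sup x y" using h by simp
  also have "inf y (sup x y) = y" by (simp add: inf.absorb1)
  finally show ?thesis .
qed

lemma three_card:
  assumes "\<not> (infinite S \<or> card S \<ge> 3)" and "x \<in> S" "y \<in> S" "z \<in> S"
  shows "x = y \<or> x = z \<or> y = z"
proof (rule ccontr)
  assume "\<not> ?thesis"
  then have "card {x, y, z} = 3" by auto
  moreover have "card {x, y, z} \<le> card S" using assms by (intro card_mono) auto
  ultimately show False using assms by auto
qed
theorem lemma5p1:
  fixes K :: "'a::lattice set" and a :: 'a
  assumes "in_variety_N5 TYPE('a)"
    and "embeds_in_free_lattice TYPE('a) TYPE('x)"
    and "convex_sublattice K"
    and "\<forall>b\<in>K. a \<parallel> b"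
  shows "(infinite {sup a b | b. b \<in> K} \<or> card {sup a b | b. b \<in> K} \<ge> 3)
       \<or> (infinite {inf a b | b. b \<in> K} \<or> card {inf a b | b. b \<in> K} \<ge> 3)
       \<or> distributive_on K"
proof -
  note var = assms(1)
  obtain f :: "'a \<Rightarrow> 'x lterm" where
    inj: "\<forall>x y. fl_eq (f x) (f y) \<longrightarrow> x = y" and
    hj: "\<forall>x y. fl_eq (f (sup x y)) (LJoin (f x) (f y))" and
    hm: "\<forall>x y. fl_eq (f (inf x y)) (LMeet (f x) (f y))"
    using assms(2) unfolding embeds_in_free_lattice_def by blast
  have W: "\<And>x y u v :: 'a. inf x y \<le> sup u v \<Longrightarrow>
      x \<le> sup u v \<or> y \<le> sup u v \<or> inf x y \<le> u \<or> inf x y \<le> v"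
    using whitman_L[OF inj hj hm] by blast
  have clj: "\<And>x y. x \<in> K \<Longrightarrow> y \<in> K \<Longrightarrow> sup x y \<in> K"
    and clm: "\<And>x y. x \<in> K \<Longrightarrow> y \<in> K \<Longrightarrow> inf x y \<in> K"
    using assms(3) unfolding convex_sublattice_def by blast+
  have par: "\<And>b. b \<in> K \<Longrightarrow> \<not> a \<le> b \<and> \<not> b \<le> a"
    using assms(4) unfolding incomparable_def by blast
  show ?thesis
  proof (rule ccontr)
    assume neg: "\<not> ?thesis"
    have tJ: "\<And>x y z. x \<in> K \<Longrightarrow> y \<in> K \<Longrightarrow> z \<in> K \<Longrightarrow>
        sup a x = sup a y \<or> sup a x = sup a z \<or> sup a y = sup a z"
    proof -
      fix x y z assume "x \<in> K" "y \<in> K" "z \<in> K"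
      then show "sup a x = sup a y \<or> sup a x = sup a z \<or> sup a y = sup a z"
        using neg by (intro three_card[of "{sup a b | b. b \<in> K}"]) auto
    qed
    have tM: "\<And>x y z. x \<in> K \<Longrightarrow> y \<in> K \<Longrightarrow> z \<in> K \<Longrightarrow>
        inf a x = inf a y \<or> inf a x = inf a z \<or> inf a y = inf a z"
    proof -
      fix x y z assume "x \<in> K" "y \<in> K" "z \<in> K"
      then show "inf a x = inf a y \<or> inf a x = inf a z \<or> inf a y = inf a z"
        using neg by (intro three_card[of "{inf a b | b. b \<in> K}"]) auto
    qed
    have nd: "\<not> distributive_on K" using neg by blast
    obtain u w v where uK: "u \<in> K" and wK: "w \<in> K" and vK: "v \<in> K" and uw: "u \<le> w"
      and nm: "inf w (sup v u) \<noteq> sup (inf w v) u"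
    proof -
      { assume md: "\<And>u w v. u \<in> K \<Longrightarrow> w \<in> K \<Longrightarrow> v \<in> K \<Longrightarrow> u \<le> w \<Longrightarrow>
           inf w (sup v u) = sup (inf w v) u"
        have "distributive_on K" unfolding distributive_on_def
        proof (intro ballI)
          fix x y z assume xK: "x \<in> K" and yK: "y \<in> K" and zK: "z \<in> K"
          define m where "m = sup (inf x y) (inf x z)"
          have e1: "inf x (sup y (inf x z)) = m"
            using md[OF clm[OF xK zK] xK yK] unfolding m_def by simp
          have e2: "inf x (sup z (inf x y)) = m"
            using md[OF clm[OF xK yK] xK zK] unfolding m_def by (simp add: sup_commute)
          have e3: "sup (sup y (inf x z)) (sup z (inf x y)) = sup y z"
            by (rule antisym) (auto intro: le_supI1 le_supI2 le_infI2)
          have "inf x (sup (sup y (inf x z)) (sup z (inf x y))) = inf x (sup y (inf x z))"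
            by (rule SDm[OF var]) (simp add: e1 e2)
          then show "inf x (sup y z) = sup (inf x y) (inf x z)" using e1 e3 m_def by simp
        qed
      }
      then show ?thesis using nd that by blast
    qed
    define p where "p = sup (inf w v) u"
    define q where "q = inf w (sup v u)"
    define r where "r = v"
    define ob where "ob = inf p r"
    define ib where "ib = sup p r"
    have pK: "p \<in> K" unfolding p_def using clj clm uK wK vK by blast
    have qK: "q \<in> K" unfolding q_def using clj clm uK wK vK by blast
    have rK: "r \<in> K" unfolding r_def using vK by blast
    have obK: "ob \<in> K" unfolding ob_def using clm pK rK by blast
    have ibK: "ib \<in> K" unfolding ib_def using clj pK rK by blast
    have pq: "p \<le> q" unfolding p_def q_def using uw
      by (auto intro: le_infI le_supI le_infI1 le_supI2 le_infI2 le_supI1)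
    have pnq: "p \<noteq> q" using nm unfolding p_def q_def by simp
    have jpr: "sup q r = ib"
    proof -
      have "sup p r = sup u v" unfolding p_def r_def
        by (rule antisym) (auto intro: le_supI1 le_supI2 le_infI2)
      moreover have "sup q r = sup u v" unfolding q_def r_def using uw
        by (rule_tac antisym) (auto intro: le_supI1 le_supI2 le_infI2 simp: sup_commute)
      ultimately show ?thesis unfolding ib_def by simp
    qed
    have mpr: "inf q r = ob"
    proof -
      have "inf q r = inf w v" unfolding q_def r_def
        by (rule antisym) (auto intro: le_infI1 le_infI2 le_supI1)
      moreover have "inf p r = inf w v"
      proof (rule antisym)
        have "inf p r \<le> inf q r" using pq by (meson inf_mono order_refl)
        then show "inf p r \<le> inf w v" using calculation by simp
        show "inf w v \<le> inf p r" unfolding p_def r_def by (auto intro: le_supI1)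
      qed
      ultimately show ?thesis unfolding ob_def by simp
    qed
    have ob_p: "ob \<le> p" and ob_r: "ob \<le> r" and p_ib: "p \<le> ib" and r_ib: "r \<le> ib"
      unfolding ob_def ib_def by auto
    have q_ib: "q \<le> ib" using jpr by (metis sup.cobounded1)
    have ob_q: "ob \<le> q" using ob_p pq by simp
    have Jmono: "\<And>x y. x \<le> y \<Longrightarrow> sup a x \<le> sup a y" by (simp add: sup.coboundedI2 le_supI2)
    have Mmono: "\<And>x y. x \<le> y \<Longrightarrow> inf a x \<le> inf a y" by (simp add: le_infI2)
    have Jib: "sup a ib = sup (sup a p) (sup a r)" unfolding ib_def by (simp add: sup_assoc sup_left_commute)
    have Mob: "inf a ob = inf (inf a p) (inf a r)" unfolding ob_def by (simp add: inf_assoc inf_left_commute)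
    have Jpq: "sup a p = sup a q"
    proof (rule ccontr)
      assume H: "sup a p \<noteq> sup a q"
      have "sup a ob = sup a p"
      proof -
        have "sup a ob \<noteq> sup a q"
          using H Jmono[OF ob_p] Jmono[OF pq] by (metis antisym)
        then show ?thesis using tJ[OF obK pK qK] H by blast
      qed
      moreover have "sup a p \<noteq> sup a r"
      proof
        assume e: "sup a p = sup a r"
        have "sup a ib = sup a p" using Jib e by simp
        then show False using H Jmono[OF pq] Jmono[OF q_ib] by (metis antisym)
      qed
      moreover have "sup a q \<noteq> sup a r"
      proof
        assume e: "sup a q = sup a r"
        have "sup a (inf q r) = sup a q" by (rule SDj[OF var e])
        then show False using calculation(1) H mpr by simp
      qed
      ultimately show False using tJ[OF pK qK rK] H by blast
    qed
    have Mpq: "inf a p = inf a q"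
    proof (rule ccontr)
      assume H: "inf a p \<noteq> inf a q"
      have c1: "inf a q = inf a ib"
      proof -
        have "inf a p \<noteq> inf a ib"
          using H Mmono[OF pq] Mmono[OF q_ib] by (metis antisym)
        then show ?thesis using tM[OF pK qK ibK] H by blast
      qed
      moreover have "inf a p \<noteq> inf a r"
      proof
        assume e: "inf a p = inf a r"
        have "inf a (sup p r) = inf a p" by (rule SDm[OF var e])
        then show False using c1 H unfolding ib_def by simp
      qed
      moreover have "inf a q \<noteq> inf a r"
      proof
        assume e: "inf a q = inf a r"
        have "inf a ob = inf a q" using mpr e by (metis inf.idem inf_assoc inf_left_commute)
        then show False using H Mmono[OF ob_p] Mmono[OF pq] by (metis antisym)
      qed
      ultimately show False using tM[OF pK qK rK] H by blast
    qed
    have c: "q \<le> sup p (inf a r)"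
    proof -
      have i1: "inf (inf (sup q p) (sup p r)) (sup a p) \<le>
          sup (sup (sup p (inf a r)) (inf (sup q p) r)) (inf a (sup q p))" by (rule I1[OF var])
      have sqp: "sup q p = q" using pq by (simp add: sup.absorb1)
      have "q \<le> inf (inf (sup q p) (sup p r)) (sup a p)"
        using sqp q_ib Jpq unfolding ib_def by (auto intro: le_infI le_supI2)
      moreover have "sup (sup (sup p (inf a r)) (inf (sup q p) r)) (inf a (sup q p)) \<le> sup p (inf a r)"
      proof -
        have aqp: "inf a q \<le> p" using Mpq by (metis inf_le2)
        have "inf q r \<le> p" using mpr ob_p by simp
        then show ?thesis using sqp aqp by (simp add: le_supI1)
      qed
      ultimately show ?thesis using i1 by (meson order_trans)
    qed
    have d: "inf q (sup a r) \<le> p"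
    proof -
      have i2: "inf (inf (inf q (sup a r)) (sup (inf p q) r)) (sup a (inf p q)) \<le>
          sup (sup (inf p q) (inf q r)) (inf a q)" by (rule I2[OF var])
      have ipq: "inf p q = p" using pq by (simp add: inf.absorb1)
      have "inf q (sup a r) \<le> inf (inf (inf q (sup a r)) (sup (inf p q) r)) (sup a (inf p q))"
        using ipq q_ib Jpq unfolding ib_def by (auto intro: le_infI le_infI1 le_supI2)
      moreover have "sup (sup (inf p q) (inf q r)) (inf a q) \<le> p"
      proof -
        have aqp: "inf a q \<le> p" using Mpq by (metis inf_le2)
        have "inf q r \<le> p" using mpr ob_p by simp
        then show ?thesis using ipq aqp by simp
      qed
      ultimately show ?thesis using i2 by (meson order_trans)
    qed
    have e: "inf a r \<noteq> inf a ob"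
    proof
      assume h: "inf a r = inf a ob"
      have "inf a r \<le> p" using h ob_p by (metis inf.coboundedI2)
      then have "q \<le> p" using c by (simp add: sup.absorb1)
      then show False using pq pnq by simp
    qed
    have ff: "sup a r \<noteq> sup a ib"
    proof
      assume h: "sup a r = sup a ib"
      have "q \<le> sup a r" using h q_ib by (metis sup.coboundedI2)
      then have "inf q (sup a r) = q" by (simp add: inf.absorb1)
      then show False using d pq pnq by simp
    qed
    have g: "inf a r = inf a ib"
    proof -
      have "inf a ob \<noteq> inf a ib"
        using e Mmono[OF ob_r] Mmono[OF r_ib] by (metis antisym)
      then show ?thesis using tM[OF obK rK ibK] e by metis
    qed
    have h: "inf a p = inf a ob"
    proof -
      have "inf a p \<noteq> inf a r" using Mob e by (metis inf.idem)
      then show ?thesis using tM[OF obK pK rK] e by metis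
    qed
    have ii: "sup a p \<noteq> sup a ob"
    proof
      assume hh: "sup a p = sup a ob"
      have "sup a ob \<le> sup a r" using Jmono[OF ob_r] .
      then have "sup a ib = sup a r" using Jib hh by (simp add: sup.absorb2)
      then show False using ff by simp
    qed
    define V where "V = sup (inf (sup a ob) p) (inf a r)"
    define t where "t = sup p (inf a r)"
    define W' where "W' = inf (sup a ob) t"
    have ob_V: "ob \<le> V" unfolding V_def using ob_p by (auto intro: le_supI1)
    have V_ib: "V \<le> ib" unfolding V_def using p_ib r_ib
      by (auto intro: le_infI2 order_trans[OF inf_le2])
    have t_ib: "t \<le> ib" unfolding t_def using p_ib r_ib by (auto intro: le_infI2)
    have V_W: "V \<le> W'" unfolding V_def W'_def t_def
      by (auto intro: le_infI1 le_infI2 le_supI1 le_supI2)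
    have WV: "W' \<le> V"
    proof -
      have i1: "inf (inf (sup W' V) (sup V p)) (sup a V) \<le>
          sup (sup (sup V (inf a p)) (inf (sup W' V) p)) (inf a (sup W' V))" by (rule I1[OF var])
      have sWV: "sup W' V = W'" using V_W by (simp add: sup.absorb1)
      have a1: "W' \<le> sup V p"
      proof -
        have "t \<le> sup V p" unfolding t_def V_def by (meson le_supI sup_ge2 le_supI1)
        then show ?thesis unfolding W'_def by (meson inf_le2 order_trans)
      qed
      have a2: "W' \<le> sup a V"
      proof -
        have "sup a ob \<le> sup a V" using Jmono[OF ob_V] .
        then show ?thesis unfolding W'_def by (meson inf_le1 order_trans)
      qed
      have b1: "inf a p \<le> V" using h ob_V by (metis inf.coboundedI2 order_trans inf_le2)
      have b2: "inf W' p \<le> V"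
      proof -
        have "inf W' p \<le> inf (sup a ob) p" unfolding W'_def by (meson inf_mono inf_le1 order_refl)
        then show ?thesis unfolding V_def by (simp add: le_supI1)
      qed
      have b3: "inf a W' \<le> V"
      proof -
        have "W' \<le> ib" unfolding W'_def using t_ib by (auto intro: le_infI2)
        then have "inf a W' \<le> inf a ib" using Mmono by blast
        then show ?thesis using g unfolding V_def by (metis le_supI2 order_trans order_refl)
      qed
      have "W' \<le> inf (inf (sup W' V) (sup V p)) (sup a V)" using sWV a1 a2 by simp
      moreover have "sup (sup (sup V (inf a p)) (inf (sup W' V) p)) (inf a (sup W' V)) \<le> V"
        using sWV b1 b2 b3 by simp
      ultimately show ?thesis using i1 by (meson order_trans)
    qed
    have "inf (sup a ob) t \<le> sup (inf (sup a ob) p) (inf a r)" using WV unfolding W'_def V_def .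
    from W[OF this] show False
    proof (elim disjE)
      assume "sup a ob \<le> sup (inf (sup a ob) p) (inf a r)"
      then have "a \<le> ib" using V_ib unfolding V_def by (meson sup.bounded_iff order_trans)
      then show False using par[OF ibK] by blast
    next
      assume "t \<le> sup (inf (sup a ob) p) (inf a r)"
      moreover have "sup (inf (sup a ob) p) (inf a r) \<le> sup a ob" by (auto intro: le_infI1 le_supI1)
      ultimately have "p \<le> sup a ob" unfolding t_def by (meson sup.bounded_iff order_trans)
      then have "sup a p \<le> sup a ob" by (simp add: le_supI1)
      then show False using ii Jmono[OF ob_p] by (metis antisym)
    next
      assume hh: "inf (sup a ob) t \<le> inf (sup a ob) p"
      have "inf a r \<le> inf (sup a ob) t" unfolding t_def by (auto intro: le_infI1 le_supI1)
      then have "inf a r \<le> p" using hh by (meson order_trans inf_le2)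
      then have "inf a r \<le> ob" unfolding ob_def by (simp add: le_infI2)
      then have "inf a r \<le> inf a ob" by simp
      then show False using e Mmono[OF ob_r] by (metis antisym)
    next
      assume hh: "inf (sup a ob) t \<le> inf a r"
      have "ob \<le> inf (sup a ob) t" unfolding t_def using ob_p by (auto intro: le_supI1)
      then have "ob \<le> a" using hh by (meson order_trans inf_le1)
      then show False using par[OF obK] by blast
    qed
  qed
qed

end
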